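(* Consider data generated with two conditions $c\in\{0,1\}$ by the noiseless linear model $\mathbf{z}\sim r(\mathbf{z})$ independently of $c$, and $\mathbf{x}=A_c\mathbf{z}$, where $A_0,A_1$ are invertible matrices. Assume $r$ is non-Gaussian in the following sense: $\mathbf{z}=B\mathbf{s}$ for an invertible matrix $B$ and a random vector $\mathbf{s}$ whose components $s_i$ are mutually independent, non-Gaussian and of unit variance; and assume moreover that for every permutation matrix $P$ and every negation matrix $N$ (diagonal with entries in $\{1,-1\}$) such that $PN\neq I$, the distribution of $PN\mathbf{s}$ differs from that of $\mathbf{s}$. Then counterfactuals are identifiable from unpaired data: the counterfactual map $\mathbf{x}\mapsto A_1A_0^{-1}\mathbf{x}$, which gives $\mathbf{x}_{c=1}\mid(\mathbf{x},c=0)$, is uniquely determined by the conditional distributions of $\mathbf{x}$ given $c=0$ and given $c=1$, among all models of the same form (a latent $\mathbf{z}'=B'\mathbf{s}'$ independent of $c$ with $\mathbf{s}'$ having mutually independent non-Gaussian unit-variance components, and $\mathbf{x}=A'_c\mathbf{z}'$ with $A'_0,A'_1$ invertible) that reproduce these two conditional distributions.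
   Context: "Unpaired data" means independent samples $(\mathbf{x}_i,c_i)$ from the data-generating process, so each observation is seen under one condition only; hence only the conditional distributions of $\mathbf{x}$ given $c$ are available. In the structural model, the counterfactual of an observation $\mathbf{x}$ observed under $c=0$ had it been observed under $c=1$ is obtained by inferring $\mathbf{z}$ from $(\mathbf{x},c=0)$ and outputting $A_1\mathbf{z}$, i.e. $A_1A_0^{-1}\mathbf{x}$. *)

theory Defs
  imports "HOL-Probability.Probability"
begin

definition non_gaussian :: "'a measure \<Rightarrow> ('a \<Rightarrow> real) \<Rightarrow> bool" where
  "non_gaussian M X \<longleftrightarrow>
     \<not> (\<exists>mu sigma. sigma > 0 \<and> distr M borel X = density lborel (normal_density mu sigma))"

definition ica_source :: "'a measure \<Rightarrow> ('a \<Rightarrow> real ^ 'n) \<Rightarrow> bool" where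
  "ica_source M s \<longleftrightarrow>
     s \<in> borel_measurable M \<and>
     prob_space.indep_vars M (\<lambda>_. borel) (\<lambda>i \<omega>. s \<omega> $ i) (UNIV :: 'n set) \<and>
     (\<forall>i. non_gaussian M (\<lambda>\<omega>. s \<omega> $ i)) \<and>
     (\<forall>i. integrable M (\<lambda>\<omega>. (s \<omega> $ i)\<^sup>2) \<and> prob_space.variance M (\<lambda>\<omega>. s \<omega> $ i) = 1)"

text \<open>The matrix P N, with P the permutation matrix of p (P i j = 1 iff j = p i) and
  N = diag(eps).\<close>
definition perm_neg_matrix :: "('n \<Rightarrow> 'n) \<Rightarrow> ('n \<Rightarrow> real) \<Rightarrow> real ^ 'n ^ 'n" where
  "perm_neg_matrix p eps = (\<chi> i j. if j = p i then eps j else 0)"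

text \<open>Conditional distribution of x given c = k (conditioning on an event of positive
  probability).\<close>
definition cond_distr :: "'a measure \<Rightarrow> ('a \<Rightarrow> real ^ 'n) \<Rightarrow> ('a \<Rightarrow> nat) \<Rightarrow> nat \<Rightarrow> (real ^ 'n) measure" where
  "cond_distr M x c k = distr (uniform_measure M {\<omega> \<in> space M. c \<omega> = k}) borel x"

text \<open>Independence of z and the discrete c is stated via the product rule for events.\<close>
definition lin_model ::
  "'a measure \<Rightarrow> ('a \<Rightarrow> nat) \<Rightarrow> ('a \<Rightarrow> real ^ 'n) \<Rightarrow> real ^ 'n ^ 'n \<Rightarrow> (nat \<Rightarrow> real ^ 'n ^ 'n) \<Rightarrow> bool" where
  "lin_model M c s B A \<longleftrightarrow>
     prob_space M \<and>
     c \<in> measurable M (count_space UNIV) \<and>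
     (\<forall>\<omega>\<in>space M. c \<omega> \<in> {0, 1}) \<and>
     measure M {\<omega> \<in> space M. c \<omega> = 0} > 0 \<and>
     measure M {\<omega> \<in> space M. c \<omega> = 1} > 0 \<and>
     ica_source M s \<and>
     invertible B \<and> invertible (A 0) \<and> invertible (A 1) \<and>
     (\<forall>S \<in> sets borel. \<forall>k.
        measure M {\<omega> \<in> space M. B *v s \<omega> \<in> S \<and> c \<omega> = k} =
        measure M {\<omega> \<in> space M. B *v s \<omega> \<in> S} * measure M {\<omega> \<in> space M. c \<omega> = k})"

definition model_x :: "('a \<Rightarrow> nat) \<Rightarrow> ('a \<Rightarrow> real ^ 'n) \<Rightarrow> real ^ 'n ^ 'n \<Rightarrow> (nat \<Rightarrow> real ^ 'n ^ 'n) \<Rightarrow> 'a \<Rightarrow> real ^ 'n" where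
  "model_x c s B A \<omega> = A (c \<omega>) *v (B *v s \<omega>)"

end

theory Submission
  imports Defs
begin

locale ratio_setup =
  fixes T :: "real^'n::finite^'n" and R :: "'n \<Rightarrow> real \<Rightarrow> real"
  assumes rows: "\<And>i. (\<Sum>j\<in>UNIV. (T$i$j)^2) = 1"
    and cols: "\<And>j. (\<Sum>i\<in>UNIV. (T$i$j)^2) = 1"
    and Rnn: "\<And>j h. R j h \<ge> 0"
    and ineq: "\<And>i u. u \<noteq> 0 \<Longrightarrow> R i u \<le> (\<Sum>j\<in>UNIV. (T$i$j)^2 * R j (T$i$j * u))"
    and lim: "\<And>j. (R j \<longlongrightarrow> 0) (at 0)"
    and R0: "\<And>j. R j 0 = 0"
begin

definition pure :: "'n \<Rightarrow> bool" where "pure k \<longleftrightarrow> (\<exists>c. \<bar>T$k$c\<bar> = 1)"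
definition sig :: "'n \<Rightarrow> 'n" where "sig k = (if pure k then (SOME c. \<bar>T$k$c\<bar> = 1) else k)"

lemma sq_le_sum: "(T$i$j)^2 \<le> 1"
proof -
  have "(T$i$j)^2 \<le> (\<Sum>j\<in>UNIV. (T$i$j)^2)"
    by (rule member_le_sum) auto
  then show ?thesis using rows[of i] by simp
qed

lemma abs_le1: "\<bar>T$i$j\<bar> \<le> 1"
  using sq_le_sum[of i j] by (simp add: abs_square_le_1)

lemma sig_pure: "pure k \<Longrightarrow> \<bar>T$k$(sig k)\<bar> = 1"
  unfolding sig_def pure_def by (auto intro: someI_ex)

lemma row_other: assumes "\<bar>T$k$c\<bar> = 1" "j \<noteq> c" shows "T$k$j = 0"
proof -
  have "(\<Sum>j\<in>UNIV. (T$k$j)^2) = (T$k$c)^2 + (\<Sum>j\<in>UNIV-{c}. (T$k$j)^2)"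
    by (subst sum.remove[of _ c]) auto
  moreover have "(T$k$c)^2 = 1" using assms(1) by (cases "T$k$c \<ge> 0") auto
  ultimately have "(\<Sum>j\<in>UNIV-{c}. (T$k$j)^2) = 0" using rows[of k] by simp
  then have "(T$k$j)^2 = 0" using assms(2)
    by (subst (asm) sum_nonneg_eq_0_iff) auto
  then show ?thesis by simp
qed

lemma col_other: assumes "\<bar>T$k$c\<bar> = 1" "i \<noteq> k" shows "T$i$c = 0"
proof -
  have "(\<Sum>i\<in>UNIV. (T$i$c)^2) = (T$k$c)^2 + (\<Sum>i\<in>UNIV-{k}. (T$i$c)^2)"
    by (subst sum.remove[of _ k]) auto
  moreover have "(T$k$c)^2 = 1" using assms(1) by (cases "T$k$c \<ge> 0") auto
  ultimately have "(\<Sum>i\<in>UNIV-{k}. (T$i$c)^2) = 0" using cols[of c] by simp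
  then have "(T$i$c)^2 = 0" using assms(2)
    by (subst (asm) sum_nonneg_eq_0_iff) auto
  then show ?thesis by simp
qed

lemma sig_inj: assumes "pure k" "pure k'" "sig k = sig k'" shows "k = k'"
proof (rule ccontr)
  assume "k \<noteq> k'"
  then have "T$k'$(sig k) = 0" using col_other[OF sig_pure[OF assms(1)], of k'] by simp
  then show False using sig_pure[OF assms(2)] assms(3) by simp
qed

lemma step: assumes "u \<noteq> 0" "R k u \<ge> m" "m > 0"
  shows "\<exists>j. T$k$j \<noteq> 0 \<and> R j (T$k$j * u) \<ge> m"
proof (rule ccontr)
  assume "\<not> ?thesis"
  then have lt: "\<And>j. T$k$j \<noteq> 0 \<Longrightarrow> R j (T$k$j * u) < m" by force
  have "\<exists>j0. T$k$j0 \<noteq> 0"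
  proof (rule ccontr)
    assume "\<not> (\<exists>j0. T$k$j0 \<noteq> 0)"
    then have "(\<Sum>j\<in>UNIV. (T$k$j)^2) = 0" by simp
    then show False using rows[of k] by simp
  qed
  then obtain j0 where j0: "T$k$j0 \<noteq> 0" by blast
  have "(\<Sum>j\<in>UNIV. (T$k$j)^2 * R j (T$k$j * u)) < (\<Sum>j\<in>UNIV. (T$k$j)^2 * m)"
  proof (rule sum_strict_mono_ex1)
    show "\<forall>j\<in>UNIV. (T$k$j)^2 * R j (T$k$j * u) \<le> (T$k$j)^2 * m"
    proof
      fix j
      show "(T$k$j)^2 * R j (T$k$j * u) \<le> (T$k$j)^2 * m"
      proof (cases "T$k$j = 0")
        case True then show ?thesis by simp
      next
        case False then show ?thesis using lt[OF False] by (intro mult_left_mono) auto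
      qed
    qed
    show "\<exists>j\<in>UNIV. (T$k$j)^2 * R j (T$k$j * u) < (T$k$j)^2 * m"
      using lt[OF j0] j0 by (intro bexI[of _ j0] mult_strict_left_mono) auto
  qed auto
  also have "\<dots> = m" using rows[of k] by (simp add: sum_distrib_right[symmetric])
  finally show False using ineq[OF assms(1), of k] assms(2) by linarith
qed

lemma step_pure: assumes "pure k" "T$k$j \<noteq> 0" shows "j = sig k"
  using row_other[OF sig_pure[OF assms(1)]] assms(2) by blast

lemma chain: assumes "u \<noteq> 0" "R k u \<ge> m" "m > 0"
  shows "\<exists>u'. \<bar>u'\<bar> = \<bar>u\<bar> \<and> R ((sig ^^ t) k) u' \<ge> m"
proof (induction t)
  case 0 then show ?case using assms by auto
next
  case (Suc t)
  then obtain u' where u': "\<bar>u'\<bar> = \<bar>u\<bar>" "R ((sig ^^ t) k) u' \<ge> m" by blast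
  let ?k = "(sig ^^ t) k"
  show ?case
  proof (cases "pure ?k")
    case True
    have "u' \<noteq> 0" using u' assms by auto
    from step[OF this u'(2) assms(3)] obtain j where j: "T$?k$j \<noteq> 0" "R j (T$?k$j * u') \<ge> m" by blast
    have "j = sig ?k" using step_pure[OF True j(1)] .
    moreover have "\<bar>T$?k$j * u'\<bar> = \<bar>u\<bar>" using sig_pure[OF True] \<open>j = sig ?k\<close> u'(1) by (simp add: abs_mult)
    ultimately show ?thesis using j(2) by (intro exI[of _ "T$?k$j * u'"]) auto
  next
    case False
    then have "(sig ^^ Suc t) k = ?k" by (simp add: sig_def)
    then show ?thesis using u' by auto
  qed
qed

lemma impure_fix: assumes np: "\<not> pure ((sig ^^ t) j)" and le: "t \<le> t'"
  shows "(sig ^^ t') j = (sig ^^ t) j"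
  using le
proof (induction rule: dec_induct)
  case base then show ?case by simp
next
  case (step m)
  then have e: "(sig ^^ m) j = (sig ^^ t) j" by simp
  have "sig ((sig ^^ m) j) = (sig ^^ m) j" using np e by (simp add: sig_def)
  then show ?case using e by simp
qed

lemma W_reach: assumes "\<not> pure i" "T$i$j \<noteq> 0"
  shows "\<not> pure ((sig ^^ CARD('n)) j)"
proof
  let ?n = "CARD('n)"
  let ?f = "\<lambda>t. (sig ^^ t) j"
  assume pn: "pure (?f ?n)"
  have allp: "pure (?f t)" if "t \<le> ?n" for t
  proof (rule ccontr)
    assume "\<not> pure (?f t)"
    have eq: "?f ?n = ?f t" by (rule impure_fix[OF \<open>\<not> pure (?f t)\<close> that])
    from pn have "pure (?f t)" unfolding eq .
    with \<open>\<not> pure (?f t)\<close> show False by contradiction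
  qed
  have notC: "\<not> \<bar>T$k$j\<bar> = 1" for k
  proof
    assume "\<bar>T$k$j\<bar> = 1"
    then have "i = k" using col_other assms(2) by blast
    then show False using assms(1) \<open>\<bar>T$k$j\<bar> = 1\<close> unfolding pure_def by blast
  qed
  have desc: "\<And>b. a < b \<Longrightarrow> b \<le> ?n \<Longrightarrow> ?f a = ?f b \<Longrightarrow> False" for a
  proof (induction a)
    case 0
    then obtain b' where b': "b = Suc b'" by (cases b) auto
    have "?f b = sig (?f b')" using b' by simp
    then have "\<bar>T$(?f b')$j\<bar> = 1" using sig_pure[OF allp[of b']] 0 b' by simp
    then show ?case using notC by blast
  next
    case (Suc a)
    then obtain b' where b': "b = Suc b'" by (cases b) auto
    have "sig (?f a) = sig (?f b')" using Suc.prems b' by simp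
    then have "?f a = ?f b'" using sig_inj allp Suc.prems b' by simp
    then show ?case using Suc.IH[of b'] Suc.prems b' by simp
  qed
  have "\<not> inj_on ?f {0..?n}"
  proof (rule pigeonhole)
    have "card (?f ` {0..?n}) \<le> card (UNIV :: 'n set)" by (rule card_mono) auto
    then show "card (?f ` {0..?n}) < card {0..?n}" by simp
  qed
  then obtain a b where ab: "a \<le> ?n" "b \<le> ?n" "a \<noteq> b" "?f a = ?f b"
    unfolding inj_on_def by auto
  show False
  proof (cases "a < b")
    case True then show ?thesis using desc ab by blast
  next
    case False then have "b < a" using ab by simp
    then show ?thesis using desc[of b a] ab by simp
  qed
qed


lemma impure_zero: assumes "\<not> pure i" shows "R i u = 0"
proof (rule ccontr)
  assume "R i u \<noteq> 0"
  define m where "m = R i u"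
  have m: "m > 0" using Rnn[of i u] \<open>R i u \<noteq> 0\<close> unfolding m_def by simp
  have u0: "u \<noteq> 0" using R0 \<open>R i u \<noteq> 0\<close> by auto
  define \<rho> where "\<rho> = Max ((\<lambda>(k,j). if pure k then 0 else \<bar>T$k$j\<bar>) ` UNIV)"
  have \<rho>ge: "\<bar>T$k$j\<bar> \<le> \<rho>" if "\<not> pure k" for k j
  proof -
    have "(\<lambda>(k,j). if pure k then 0 else \<bar>T$k$j\<bar>) (k,j) \<in> (\<lambda>(k,j). if pure k then 0 else \<bar>T$k$j\<bar>) ` UNIV"
      by blast
    then have "(\<lambda>(k,j). if pure k then 0 else \<bar>T$k$j\<bar>) (k,j) \<le> \<rho>"
      unfolding \<rho>_def by (intro Max_ge) auto
    then show ?thesis using that by simp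
  qed
  have \<rho>lt: "\<rho> < 1"
    unfolding \<rho>_def
  proof (subst Max_less_iff, simp, simp, clarify)
    fix k j
    show "(if pure k then 0 else \<bar>T$k$j\<bar>) < 1"
      using abs_le1[of k j] unfolding pure_def by (auto simp: less_le)
  qed
  have \<rho>nn: "0 \<le> \<rho>" using \<rho>ge[OF assms, of i] by simp
  have main: "\<exists>k v. \<not> pure k \<and> v \<noteq> 0 \<and> \<bar>v\<bar> \<le> \<rho>^N * \<bar>u\<bar> \<and> R k v \<ge> m" for N
  proof (induction N)
    case 0 then show ?case using assms u0 by (intro exI[of _ i] exI[of _ u]) (auto simp: m_def)
  next
    case (Suc N)
    then obtain k v where kv: "\<not> pure k" "v \<noteq> 0" "\<bar>v\<bar> \<le> \<rho>^N * \<bar>u\<bar>" "R k v \<ge> m" by blast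
    from step[OF kv(2) kv(4) m] obtain j where j: "T$k$j \<noteq> 0" "R j (T$k$j * v) \<ge> m" by blast
    have nz: "T$k$j * v \<noteq> 0" using j(1) kv(2) by simp
    from chain[OF nz j(2) m, of "CARD('n)"] obtain v' where
      v': "\<bar>v'\<bar> = \<bar>T$k$j * v\<bar>" "R ((sig ^^ CARD('n)) j) v' \<ge> m" by blast
    have "\<bar>v'\<bar> \<le> \<rho> * \<bar>v\<bar>" using v'(1) \<rho>ge[OF kv(1), of j]
      by (simp add: abs_mult mult_right_mono)
    also have "\<dots> \<le> \<rho> * (\<rho>^N * \<bar>u\<bar>)" using kv(3) \<rho>nn by (simp add: mult_left_mono)
    finally have "\<bar>v'\<bar> \<le> \<rho>^Suc N * \<bar>u\<bar>" by (simp add: mult.assoc)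
    moreover have "v' \<noteq> 0" using v'(1) nz by auto
    ultimately show ?case using W_reach[OF kv(1) j(1)] v'(2) by blast
  qed
  define F where "F h = (\<Sum>j\<in>UNIV. R j h)" for h
  have "(F \<longlongrightarrow> 0) (at 0)" unfolding F_def using lim by (auto intro!: tendsto_null_sum)
  then have "eventually (\<lambda>h. F h < m) (at 0)" using m by (simp add: order_tendstoD(2))
  then obtain d where d: "d > 0" "\<And>h. h \<noteq> 0 \<Longrightarrow> dist h 0 < d \<Longrightarrow> F h < m"
    unfolding eventually_at by auto
  obtain N where N: "\<rho>^N < d / (\<bar>u\<bar> + 1)"
  proof (cases "\<rho> = 0")
    case True then show ?thesis using that[of 1] d by simp
  next
    case False then show ?thesis using real_arch_pow_inv[of "d / (\<bar>u\<bar> + 1)" \<rho>] \<rho>lt d that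
      by (auto simp: field_simps)
  qed
  obtain k v where kv: "\<not> pure k" "v \<noteq> 0" "\<bar>v\<bar> \<le> \<rho>^N * \<bar>u\<bar>" "R k v \<ge> m" using main by blast
  have "\<rho>^N * \<bar>u\<bar> \<le> d / (\<bar>u\<bar> + 1) * \<bar>u\<bar>" using N by (intro mult_right_mono) auto
  also have "\<dots> < d" using d(1) by (simp add: field_simps)
  finally have "F v < m" using d(2)[OF kv(2)] kv(3) by simp
  moreover have "R k v \<le> F v" unfolding F_def by (rule member_le_sum) (auto intro: Rnn)
  ultimately show False using kv(4) by simp
qed

end

definition gam :: "real \<Rightarrow> real \<Rightarrow> complex" where
  "gam m u = exp (\<i> * complex_of_real (m * u) + complex_of_real (-(u^2)/2))"

lemma gam0: "gam m 0 = 1" by (simp add: gam_def)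

lemma gam_norm: "norm (gam m u) \<le> 1"
  by (simp add: gam_def norm_exp_eq_Re)

lemma gam_split: "gam m u = iexp (m * u) * complex_of_real (exp (-(u^2)/2))"
  by (simp only: gam_def exp_add exp_of_real)

lemma gam_prod:
  fixes T :: "real^'n::finite^'n" and \<mu> :: "'n \<Rightarrow> real"
  assumes rows: "(\<Sum>j\<in>UNIV. (T$i$j)^2) = 1"
    and mean: "(\<Sum>j\<in>UNIV. T$i$j * \<mu> j) = \<mu> i"
  shows "gam (\<mu> i) u = (\<Prod>j\<in>UNIV. gam (\<mu> j) (T$i$j * u))"
proof -
  have "(\<Sum>j\<in>UNIV. \<mu> j * (T$i$j * u)) = (\<Sum>j\<in>UNIV. T$i$j * \<mu> j) * u"
    by (simp add: sum_distrib_right sum_distrib_left ac_simps)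
  then have s1: "(\<Sum>j\<in>UNIV. \<mu> j * (T$i$j * u)) = \<mu> i * u" using mean by simp
  have s2: "(\<Sum>j\<in>UNIV. -((T$i$j * u)^2)/2) = -(u^2)/2"
  proof -
    have "(\<Sum>j\<in>UNIV. -((T$i$j * u)^2)/2) = (\<Sum>j\<in>UNIV. (T$i$j)^2) * (-(u^2)/2)"
      by (simp add: sum_distrib_right power_mult_distrib sum_negf sum_divide_distrib)
    then show ?thesis using rows by simp
  qed
  have "(\<Prod>j\<in>UNIV. gam (\<mu> j) (T$i$j * u))
      = exp (\<Sum>j\<in>UNIV. \<i> * complex_of_real (\<mu> j * (T$i$j * u)) + complex_of_real (-((T$i$j * u)^2)/2))"
    unfolding gam_def by (simp add: exp_sum)
  also have "(\<Sum>j\<in>UNIV. \<i> * complex_of_real (\<mu> j * (T$i$j * u)) + complex_of_real (-((T$i$j * u)^2)/2))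
      = \<i> * complex_of_real (\<Sum>j\<in>UNIV. \<mu> j * (T$i$j * u)) + complex_of_real (\<Sum>j\<in>UNIV. -((T$i$j * u)^2)/2)"
    by (simp only: sum.distrib of_real_sum sum_distrib_left)
  also have "\<dots> = \<i> * complex_of_real (\<mu> i * u) + complex_of_real (-(u^2)/2)"
    by (simp only: s1 s2)
  finally show ?thesis by (simp add: gam_def)
qed

lemma char_normal: "char (density lborel (normal_density m 1)) u = gam m u"
proof -
  let ?N0 = "density lborel std_normal_density"
  interpret N0: prob_space ?N0 by (rule prob_space_normal_density) simp
  have "distr ?N0 lborel (\<lambda>x. x) = ?N0" by (rule distr_id2) simp
  then have "distributed ?N0 lborel (\<lambda>x. x) std_normal_density"
    unfolding distributed_def by simp
  then have "distributed ?N0 lborel (\<lambda>x. m + 1 * x) (normal_density (m + 1 * 0) (\<bar>1\<bar> * 1))"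
    by (rule N0.normal_density_affine) simp_all
  then have "distributed ?N0 lborel (\<lambda>x. m + x) (normal_density m 1)" by simp
  then have d: "distr ?N0 lborel (\<lambda>x. m + x) = density lborel (normal_density m 1)"
    by (rule distributed_distr_eq_density)
  have "char (density lborel (normal_density m 1)) u = (CLINT x|?N0. iexp (u * (m + x)))"
    unfolding d[symmetric] char_def by (rule integral_distr) auto
  also have "\<dots> = (CLINT x|?N0. iexp (m * u) * iexp (u * x))"
    by (simp add: algebra_simps exp_add)
  also have "\<dots> = iexp (m * u) * char ?N0 u"
    unfolding char_def by (rule integral_mult_right_zero)
  also have "\<dots> = gam m u"
    by (simp add: char_std_normal_distribution gam_split)
  finally show ?thesis .
qed

context prob_space
begin

lemma src_facts:
  fixes s :: "'a \<Rightarrow> real^'n::finite"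
  assumes src: "ica_source M s"
  shows src_meas: "s \<in> borel_measurable M"
    and comp_meas: "\<And>j. (\<lambda>\<omega>. s \<omega> $ j) \<in> borel_measurable M"
    and int2: "\<And>j. integrable M (\<lambda>\<omega>. (s \<omega> $ j)^2)"
    and int1: "\<And>j. integrable M (\<lambda>\<omega>. s \<omega> $ j)"
    and var1: "\<And>j. variance (\<lambda>\<omega>. s \<omega> $ j) = 1"
    and indep: "indep_vars (\<lambda>_. borel) (\<lambda>i \<omega>. s \<omega> $ i) UNIV"
proof -
  show sm: "s \<in> borel_measurable M" using src unfolding ica_source_def by simp
  show cm: "(\<lambda>\<omega>. s \<omega> $ j) \<in> borel_measurable M" for j
    by (rule measurable_compose[OF sm borel_measurable_nth])
  show i2: "integrable M (\<lambda>\<omega>. (s \<omega> $ j)^2)" for j using src unfolding ica_source_def by simp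
  show "integrable M (\<lambda>\<omega>. s \<omega> $ j)" for j
    by (rule square_integrable_imp_integrable[OF cm i2])
  show "variance (\<lambda>\<omega>. s \<omega> $ j) = 1" for j using src unfolding ica_source_def by simp
  show "indep_vars (\<lambda>_. borel) (\<lambda>i \<omega>. s \<omega> $ i) UNIV" using src unfolding ica_source_def by simp
qed

lemma intprod:
  fixes s :: "'a \<Rightarrow> real^'n::finite"
  assumes src: "ica_source M s"
  shows "integrable M (\<lambda>\<omega>. s \<omega> $ j * s \<omega> $ l)"
proof (rule Bochner_Integration.integrable_bound)
  show "integrable M (\<lambda>\<omega>. (s \<omega> $ j)^2 + (s \<omega> $ l)^2)"
    using int2[OF src] by auto
  show "(\<lambda>\<omega>. s \<omega> $ j * s \<omega> $ l) \<in> borel_measurable M"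
    using comp_meas[OF src] by measurable
  show "AE x in M. norm (s x $ j * s x $ l) \<le> norm ((s x $ j)^2 + (s x $ l)^2)"
  proof (rule AE_I2)
    fix x
    have "2 * \<bar>s x $ j\<bar> * \<bar>s x $ l\<bar> \<le> (s x $ j)^2 + (s x $ l)^2"
      using sum_squares_bound[of "\<bar>s x $ j\<bar>" "\<bar>s x $ l\<bar>"] by (simp add: power2_abs)
    moreover have "0 \<le> \<bar>s x $ j\<bar> * \<bar>s x $ l\<bar>" by simp
    ultimately have "\<bar>s x $ j\<bar> * \<bar>s x $ l\<bar> \<le> (s x $ j)^2 + (s x $ l)^2" by linarith
    then show "norm (s x $ j * s x $ l) \<le> norm ((s x $ j)^2 + (s x $ l)^2)"
      by (simp add: abs_mult)
  qed
qed

lemma second_moment: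
  fixes s :: "'a \<Rightarrow> real^'n::finite"
  assumes src: "ica_source M s"
  shows "expectation (\<lambda>\<omega>. s \<omega> $ j * s \<omega> $ l) =
     expectation (\<lambda>\<omega>. s \<omega> $ j) * expectation (\<lambda>\<omega>. s \<omega> $ l) + (if j = l then 1 else 0)"
proof (cases "j = l")
  case True
  have "variance (\<lambda>\<omega>. s \<omega> $ j) = expectation (\<lambda>\<omega>. (s \<omega> $ j)^2) - (expectation (\<lambda>\<omega>. s \<omega> $ j))^2"
    by (rule variance_eq[OF int1[OF src] int2[OF src]])
  then show ?thesis using True var1[OF src, of j] by (simp add: power2_eq_square)
next
  case False
  have ind: "indep_vars (\<lambda>_. borel) (\<lambda>i \<omega>. s \<omega> $ i) {j, l}"
    by (rule indep_vars_subset[OF indep[OF src]]) auto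
  have "expectation (\<lambda>\<omega>. \<Prod>i\<in>{j,l}. s \<omega> $ i) = (\<Prod>i\<in>{j,l}. expectation (\<lambda>\<omega>. s \<omega> $ i))"
    by (rule indep_vars_lebesgue_integral[OF _ ind]) (auto intro: int1[OF src])
  then show ?thesis using False by simp
qed


lemma mv_meas: "(\<lambda>x::real^'n::finite. T *v x) \<in> borel_measurable borel"
  by (intro borel_measurable_continuous_onI linear_continuous_on matrix_vector_mul_bounded_linear)

lemma transfer_exp:
  fixes s :: "'a \<Rightarrow> real^'n::finite"
  assumes sm: "s \<in> borel_measurable M"
    and eq: "distr M borel (\<lambda>\<omega>. T *v s \<omega>) = distr M borel s"
    and f: "f \<in> borel_measurable borel"
  shows "expectation (\<lambda>\<omega>. f (T *v s \<omega>)) = expectation (\<lambda>\<omega>. (f (s \<omega>) :: real))"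
proof -
  have tm: "(\<lambda>\<omega>. T *v s \<omega>) \<in> borel_measurable M" by (rule measurable_compose[OF sm mv_meas])
  have "expectation (\<lambda>\<omega>. f (T *v s \<omega>)) = integral\<^sup>L (distr M borel (\<lambda>\<omega>. T *v s \<omega>)) f"
    by (rule integral_distr[OF tm f, symmetric])
  also have "\<dots> = integral\<^sup>L (distr M borel s) f" by (simp add: eq)
  also have "\<dots> = expectation (\<lambda>\<omega>. f (s \<omega>))" by (rule integral_distr[OF sm f])
  finally show ?thesis .
qed

lemma orth:
  fixes s :: "'a \<Rightarrow> real^'n::finite"
  assumes src: "ica_source M s"
    and eq: "distr M borel (\<lambda>\<omega>. T *v s \<omega>) = distr M borel s"
  shows "T ** Finite_Cartesian_Product.transpose T = mat 1"
    and "(\<Sum>j\<in>UNIV. T$i$j * expectation (\<lambda>\<omega>. s \<omega> $ j)) = expectation (\<lambda>\<omega>. s \<omega> $ i)"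
proof -
  define \<mu> where "\<mu> j = expectation (\<lambda>\<omega>. s \<omega> $ j)" for j
  note sm = src_meas[OF src]
  have comp: "(T *v x) $ i = (\<Sum>j\<in>UNIV. T$i$j * x$j)" for x :: "real^'n" and i
    by (simp add: matrix_vector_mult_def)
  have mean: "(\<Sum>j\<in>UNIV. T$i$j * \<mu> j) = \<mu> i" for i
  proof -
    have "expectation (\<lambda>\<omega>. (T *v s \<omega>) $ i) = expectation (\<lambda>\<omega>. s \<omega> $ i)"
      by (rule transfer_exp[OF sm eq borel_measurable_nth])
    moreover have "expectation (\<lambda>\<omega>. (T *v s \<omega>) $ i) = (\<Sum>j\<in>UNIV. T$i$j * \<mu> j)"
      unfolding comp \<mu>_def
      by (subst Bochner_Integration.integral_sum[where f="\<lambda>j \<omega>. T$i$j * s \<omega> $ j"])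
         (auto intro!: integrable_mult_right int1[OF src] simp: integral_mult_right_zero)
    ultimately show ?thesis unfolding \<mu>_def by simp
  qed
  then show "(\<Sum>j\<in>UNIV. T$i$j * expectation (\<lambda>\<omega>. s \<omega> $ j)) = expectation (\<lambda>\<omega>. s \<omega> $ i)"
    unfolding \<mu>_def .
  have cov: "(\<Sum>j\<in>UNIV. T$i$j * T$k$j) = (if i = k then 1 else 0)" for i k
  proof -
    have fm: "(\<lambda>x::real^'n. x $ i * x $ k) \<in> borel_measurable borel" by measurable
    have "expectation (\<lambda>\<omega>. (T *v s \<omega>) $ i * (T *v s \<omega>) $ k) = expectation (\<lambda>\<omega>. s \<omega> $ i * s \<omega> $ k)"
      by (rule transfer_exp[OF sm eq fm])
    also have "\<dots> = \<mu> i * \<mu> k + (if i = k then 1 else 0)"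
      unfolding \<mu>_def by (rule second_moment[OF src])
    finally have e1: "expectation (\<lambda>\<omega>. (T *v s \<omega>) $ i * (T *v s \<omega>) $ k) = \<mu> i * \<mu> k + (if i = k then 1 else 0)" .
    have "expectation (\<lambda>\<omega>. (T *v s \<omega>) $ i * (T *v s \<omega>) $ k)
        = expectation (\<lambda>\<omega>. \<Sum>j\<in>UNIV. \<Sum>l\<in>UNIV. (T$i$j * T$k$l) * (s \<omega> $ j * s \<omega> $ l))"
      unfolding comp sum_product by (simp add: ac_simps)
    also have "\<dots> = (\<Sum>j\<in>UNIV. \<Sum>l\<in>UNIV. (T$i$j * T$k$l) * expectation (\<lambda>\<omega>. s \<omega> $ j * s \<omega> $ l))"
      by (simp add: Bochner_Integration.integral_sum intprod[OF src] integral_mult_right_zero)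
    also have "\<dots> = (\<Sum>j\<in>UNIV. \<Sum>l\<in>UNIV. (T$i$j * T$k$l) * (\<mu> j * \<mu> l + (if j = l then 1 else 0)))"
      unfolding \<mu>_def by (simp add: second_moment[OF src])
    also have "\<dots> = (\<Sum>j\<in>UNIV. \<Sum>l\<in>UNIV. (T$i$j * \<mu> j) * (T$k$l * \<mu> l)) + (\<Sum>j\<in>UNIV. \<Sum>l\<in>UNIV. (T$i$j * T$k$l) * (if j = l then 1 else 0))"
      by (simp add: algebra_simps sum.distrib)
    also have "\<dots> = \<mu> i * \<mu> k + (\<Sum>j\<in>UNIV. T$i$j * T$k$j)"
      by (simp add: sum_product[symmetric] mean if_distrib sum.delta cong: if_cong)
    finally show ?thesis using e1 by simp
  qed
  show "T ** Finite_Cartesian_Product.transpose T = mat 1"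
    by (simp add: vec_eq_iff matrix_matrix_mult_def transpose_def mat_def cov)
qed


lemma char_scale:
  assumes X: "X \<in> borel_measurable M"
  shows "char (distr M borel (\<lambda>\<omega>. c * X \<omega>)) u = char (distr M borel X) (c * u)"
proof -
  have cX: "(\<lambda>\<omega>. c * X \<omega>) \<in> borel_measurable M" using X by measurable
  have "char (distr M borel (\<lambda>\<omega>. c * X \<omega>)) u = (CLINT \<omega>|M. iexp (u * (c * X \<omega>)))"
    unfolding char_def by (rule integral_distr[OF cX]) measurable
  also have "\<dots> = (CLINT \<omega>|M. iexp ((c * u) * X \<omega>))" by (simp add: ac_simps)
  also have "\<dots> = char (distr M borel X) (c * u)"
    unfolding char_def by (rule integral_distr[OF X, symmetric]) measurable
  finally show ?thesis .
qed

lemma char_eq: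
  fixes s :: "'a \<Rightarrow> real^'n::finite"
  assumes src: "ica_source M s"
    and eq: "distr M borel (\<lambda>\<omega>. T *v s \<omega>) = distr M borel s"
  shows "char (distr M borel (\<lambda>\<omega>. s \<omega> $ i)) u =
     (\<Prod>j\<in>UNIV. char (distr M borel (\<lambda>\<omega>. s \<omega> $ j)) (T$i$j * u))"
proof -
  note sm = src_meas[OF src]
  have tm: "(\<lambda>\<omega>. T *v s \<omega>) \<in> borel_measurable M" by (rule measurable_compose[OF sm mv_meas])
  have "distr M borel (\<lambda>\<omega>. (T *v s \<omega>) $ i) = distr (distr M borel (\<lambda>\<omega>. T *v s \<omega>)) borel (\<lambda>x. x $ i)"
    by (subst distr_distr[OF borel_measurable_nth tm]) (simp add: comp_def)
  also have "\<dots> = distr (distr M borel s) borel (\<lambda>x. x $ i)" by (simp add: eq)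
  also have "\<dots> = distr M borel (\<lambda>\<omega>. s \<omega> $ i)"
    by (subst distr_distr[OF borel_measurable_nth sm]) (simp add: comp_def)
  finally have d: "distr M borel (\<lambda>\<omega>. (T *v s \<omega>) $ i) = distr M borel (\<lambda>\<omega>. s \<omega> $ i)" .
  have "char (distr M borel (\<lambda>\<omega>. s \<omega> $ i)) u = char (distr M borel (\<lambda>\<omega>. \<Sum>j\<in>UNIV. T$i$j * s \<omega> $ j)) u"
    using d by (simp add: matrix_vector_mult_def)
  also have "\<dots> = (\<Prod>j\<in>UNIV. char (distr M borel (\<lambda>\<omega>. T$i$j * s \<omega> $ j)) u)"
  proof (rule char_distr_sum)
    show "indep_vars (\<lambda>_. borel) (\<lambda>j \<omega>. T$i$j * s \<omega> $ j) UNIV"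
      by (rule indep_vars_compose2[OF indep[OF src]]) measurable
  qed
  also have "\<dots> = (\<Prod>j\<in>UNIV. char (distr M borel (\<lambda>\<omega>. s \<omega> $ j)) (T$i$j * u))"
    by (simp add: char_scale[OF comp_meas[OF src]])
  finally show ?thesis .
qed

end

lemma expb: assumes "0 \<le> (x::real)" shows "\<bar>exp (-x) - (1 - x)\<bar> \<le> x^2"
proof -
  have lo: "1 - x \<le> exp (-x)" using exp_ge_add_one_self[of "-x"] by simp
  have ex: "1 + x \<le> exp x" using exp_ge_add_one_self[of x] by simp
  have pos: "0 < 1 + x" using assms by simp
  have "exp (-x) = 1 / exp x" by (simp add: exp_minus field_simps)
  also have "\<dots> \<le> 1 / (1 + x)" using ex pos by (intro divide_left_mono) auto
  also have "\<dots> \<le> 1 - x + x^2"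
  proof -
    have "1 \<le> (1 - x + x^2) * (1 + x)" using assms by (simp add: algebra_simps power2_eq_square power3_eq_cube)
    then show ?thesis using pos by (simp add: divide_le_eq)
  qed
  finally show ?thesis using lo by simp
qed

context prob_space
begin

lemma E_lim:
  fixes Y :: "'a \<Rightarrow> real"
  assumes Y: "Y \<in> borel_measurable M" "integrable M (\<lambda>\<omega>. (Y \<omega>)^2)"
  shows "((\<lambda>h. expectation (\<lambda>\<omega>. min (6 * (Y \<omega>)^2) (\<bar>h\<bar> * \<bar>Y \<omega>\<bar>^3))) \<longlongrightarrow> 0) (at 0)"
proof (subst tendsto_at_iff_sequentially, intro allI impI)
  fix X :: "nat \<Rightarrow> real"
  assume "X \<longlonglongrightarrow> 0"
  then have X0: "(\<lambda>n. \<bar>X n\<bar>) \<longlonglongrightarrow> 0" by (simp add: tendsto_rabs_zero_iff)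
  have "(\<lambda>n. expectation (\<lambda>\<omega>. min (6 * (Y \<omega>)^2) (\<bar>X n\<bar> * \<bar>Y \<omega>\<bar>^3))) \<longlonglongrightarrow> expectation (\<lambda>\<omega>. 0)"
  proof (rule integral_dominated_convergence[where w="\<lambda>\<omega>. 6 * (Y \<omega>)^2"])
    show "integrable M (\<lambda>\<omega>. 6 * (Y \<omega>)^2)" using Y by auto
    show "(\<lambda>\<omega>. 0::real) \<in> borel_measurable M" by simp
    show "(\<lambda>\<omega>. min (6 * (Y \<omega>)^2) (\<bar>X n\<bar> * \<bar>Y \<omega>\<bar>^3)) \<in> borel_measurable M" for n
      using Y(1) by measurable
    show "AE \<omega> in M. (\<lambda>n. min (6 * (Y \<omega>)^2) (\<bar>X n\<bar> * \<bar>Y \<omega>\<bar>^3)) \<longlonglongrightarrow> 0"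
    proof (rule AE_I2)
      fix \<omega>
      have "(\<lambda>n. min (6 * (Y \<omega>)^2) (\<bar>X n\<bar> * \<bar>Y \<omega>\<bar>^3)) \<longlonglongrightarrow> min (6 * (Y \<omega>)^2) (0 * \<bar>Y \<omega>\<bar>^3)"
        by (intro tendsto_intros X0)
      then show "(\<lambda>n. min (6 * (Y \<omega>)^2) (\<bar>X n\<bar> * \<bar>Y \<omega>\<bar>^3)) \<longlonglongrightarrow> 0" by simp
    qed
    show "AE \<omega> in M. norm (min (6 * (Y \<omega>)^2) (\<bar>X n\<bar> * \<bar>Y \<omega>\<bar>^3)) \<le> 6 * (Y \<omega>)^2" for n
      by (rule AE_I2) auto
  qed
  then show "((\<lambda>h. expectation (\<lambda>\<omega>. min (6 * (Y \<omega>)^2) (\<bar>h\<bar> * \<bar>Y \<omega>\<bar>^3))) \<circ> X) \<longlonglongrightarrow> 0"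
    by (simp add: comp_def)
qed

lemma R_lim:
  assumes X: "X \<in> borel_measurable M" "integrable M (\<lambda>\<omega>. (X \<omega>)^2)" "variance X = 1"
  shows "((\<lambda>h. cmod (char (distr M borel X) h - gam (expectation X) h) / h^2) \<longlongrightarrow> 0) (at 0)"
proof -
  define m where "m = expectation X"
  define Y where "Y \<omega> = X \<omega> - m" for \<omega>
  have iX: "integrable M X" by (rule square_integrable_imp_integrable[OF X(1,2)])
  have Ym[measurable]: "Y \<in> borel_measurable M" unfolding Y_def using X(1) by measurable
  have iY: "integrable M Y" unfolding Y_def using iX by auto
  have iY2: "integrable M (\<lambda>\<omega>. (Y \<omega>)^2)" unfolding Y_def using iX X(2)
    by (auto simp: power2_diff)
  have EY: "expectation Y = 0" unfolding Y_def m_def using iX by (simp add: prob_space)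
  have VY: "variance Y = 1" using X(3) EY unfolding Y_def m_def by simp
  define E where "E h = expectation (\<lambda>\<omega>. min (6 * (Y \<omega>)^2) (\<bar>h\<bar> * \<bar>Y \<omega>\<bar>^3))" for h
  have app: "cmod (char (distr M borel Y) h - (1 - h^2 * 1 / 2)) \<le> (h^2 / 6) * E h" for h
    unfolding E_def by (rule char_approx3'[OF Ym iY iY2 EY VY refl])
  have cX: "char (distr M borel X) h = iexp (m * h) * char (distr M borel Y) h" for h
  proof -
    have "char (distr M borel X) h = (CLINT \<omega>|M. iexp (h * X \<omega>))"
      unfolding char_def by (rule integral_distr[OF X(1)]) measurable
    also have "\<dots> = (CLINT \<omega>|M. iexp (m * h) * iexp (h * Y \<omega>))"
      unfolding Y_def by (simp add: algebra_simps exp_add[symmetric])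
    also have "\<dots> = iexp (m * h) * (CLINT \<omega>|M. iexp (h * Y \<omega>))"
      by (rule integral_mult_right_zero)
    also have "(CLINT \<omega>|M. iexp (h * Y \<omega>)) = char (distr M borel Y) h"
      unfolding char_def by (rule integral_distr[OF Ym, symmetric]) measurable
    finally show ?thesis .
  qed
  have bound: "cmod (char (distr M borel X) h - gam m h) / h^2 \<le> E h / 6 + h^2 / 4" if "h \<noteq> 0" for h
  proof -
    have "cmod (char (distr M borel X) h - gam m h)
        = cmod (iexp (m * h) * (char (distr M borel Y) h - complex_of_real (exp (-(h^2)/2))))"
      unfolding cX gam_split by (simp add: algebra_simps)
    also have "\<dots> = cmod (char (distr M borel Y) h - complex_of_real (exp (-(h^2)/2)))"
      by (simp add: norm_mult)
    also have "\<dots> \<le> cmod (char (distr M borel Y) h - (1 - h^2 * 1 / 2))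
                 + cmod (complex_of_real (1 - h^2/2) - complex_of_real (exp (-(h^2)/2)))"
      by (rule order_trans[OF _ norm_triangle_ineq]) (simp add: algebra_simps)
    also have "cmod (complex_of_real (1 - h^2/2) - complex_of_real (exp (-(h^2)/2)))
             = \<bar>exp (-(h^2/2)) - (1 - h^2/2)\<bar>"
      by (simp only: of_real_diff[symmetric] norm_of_real) simp
    also have "\<dots> \<le> (h^2/2)^2" by (rule expb) simp
    finally have "cmod (char (distr M borel X) h - gam m h) \<le> (h^2 / 6) * E h + (h^2/2)^2"
      using app[of h] by linarith
    then have "cmod (char (distr M borel X) h - gam m h) / h^2 \<le> ((h^2 / 6) * E h + (h^2/2)^2) / h^2"
      by (simp add: divide_right_mono)
    also have "\<dots> = E h / 6 + h^2 / 4" using that by (simp add: field_simps power2_eq_square)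
    finally show ?thesis .
  qed
  have El: "(E \<longlongrightarrow> 0) (at 0)" unfolding E_def by (rule E_lim[OF Ym iY2])
  have hl: "((\<lambda>h. E h / 6 + h^2 / 4) \<longlongrightarrow> 0) (at 0)"
    using El by (auto intro!: tendsto_eq_intros)
  show ?thesis unfolding m_def[symmetric]
  proof (rule tendsto_sandwich[OF _ _ tendsto_const hl])
    show "\<forall>\<^sub>F h in at 0. 0 \<le> cmod (char (distr M borel X) h - gam m h) / h^2" by simp
    show "\<forall>\<^sub>F h in at 0. cmod (char (distr M borel X) h - gam m h) / h^2 \<le> E h / 6 + h^2 / 4"
      unfolding eventually_at by (intro exI[of _ 1]) (auto intro: bound)
  qed
qed

end

context prob_space
begin

lemma ident_main:
  fixes s :: "'a \<Rightarrow> real^'n::finite"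
  assumes src: "ica_source M s"
    and eq: "distr M borel (\<lambda>\<omega>. T *v s \<omega>) = distr M borel s"
  shows "\<exists>p eps. p permutes UNIV \<and> (\<forall>j. eps j \<in> {1, -1}) \<and> T = perm_neg_matrix p eps"
proof -
  define \<mu> where "\<mu> j = expectation (\<lambda>\<omega>. s \<omega> $ j)" for j
  define \<phi> where "\<phi> j = char (distr M borel (\<lambda>\<omega>. s \<omega> $ j))" for j
  define R where "R j h = cmod (\<phi> j h - gam (\<mu> j) h) / h^2" for j h
  have TT: "T ** Finite_Cartesian_Product.transpose T = mat 1" by (rule orth(1)[OF src eq])
  have mean: "(\<Sum>j\<in>UNIV. T$i$j * \<mu> j) = \<mu> i" for i unfolding \<mu>_def by (rule orth(2)[OF src eq])
  have "orthogonal_matrix (Finite_Cartesian_Product.transpose T)"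
    unfolding orthogonal_matrix using TT by simp
  then have TtT: "Finite_Cartesian_Product.transpose T ** T = mat 1"
    unfolding orthogonal_matrix_def by simp
  have rows: "(\<Sum>j\<in>UNIV. (T$i$j)^2) = 1" for i
  proof -
    have "(T ** Finite_Cartesian_Product.transpose T) $ i $ i = 1" using TT by (simp add: mat_def)
    then show ?thesis by (simp add: matrix_matrix_mult_def transpose_def power2_eq_square)
  qed
  have cols: "(\<Sum>i\<in>UNIV. (T$i$j)^2) = 1" for j
  proof -
    have "(Finite_Cartesian_Product.transpose T ** T) $ j $ j = 1" using TtT by (simp add: mat_def)
    then show ?thesis by (simp add: matrix_matrix_mult_def transpose_def power2_eq_square)
  qed
  have rd: "real_distribution (distr M borel (\<lambda>\<omega>. s \<omega> $ j))" for j
    by (rule real_distribution_distr[OF comp_meas[OF src]])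
  have phi_le: "norm (\<phi> j h) \<le> 1" for j h
    unfolding \<phi>_def by (rule real_distribution.cmod_char_le_1[OF rd])
  have g_eq: "cmod (\<phi> j h - gam (\<mu> j) h) = h^2 * R j h" for j h
  proof (cases "h = 0")
    case True
    then show ?thesis unfolding \<phi>_def using real_distribution.char_zero[OF rd] by (simp add: gam0)
  next
    case False then show ?thesis unfolding R_def by simp
  qed
  interpret r: ratio_setup T R
  proof
    show "(\<Sum>j\<in>UNIV. (T$i$j)^2) = 1" for i by (rule rows)
    show "(\<Sum>i\<in>UNIV. (T$i$j)^2) = 1" for j by (rule cols)
    show "R j h \<ge> 0" for j h unfolding R_def by simp
    show "R j 0 = 0" for j unfolding R_def by simp
    show "(R j \<longlongrightarrow> 0) (at 0)" for j
      unfolding R_def \<phi>_def \<mu>_def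
      by (rule R_lim[OF comp_meas[OF src] int2[OF src] var1[OF src]])
    show "R i u \<le> (\<Sum>j\<in>UNIV. (T$i$j)^2 * R j (T$i$j * u))" if "u \<noteq> 0" for i u
    proof -
      have e1: "\<phi> i u = (\<Prod>j\<in>UNIV. \<phi> j (T$i$j * u))"
        unfolding \<phi>_def by (rule char_eq[OF src eq])
      have e2: "gam (\<mu> i) u = (\<Prod>j\<in>UNIV. gam (\<mu> j) (T$i$j * u))"
        by (rule gam_prod[OF rows mean])
      have "cmod (\<phi> i u - gam (\<mu> i) u)
          = cmod ((\<Prod>j\<in>UNIV. \<phi> j (T$i$j * u)) - (\<Prod>j\<in>UNIV. gam (\<mu> j) (T$i$j * u)))"
        by (subst e1, subst e2, rule refl)
      also have "\<dots> \<le> (\<Sum>j\<in>UNIV. cmod (\<phi> j (T$i$j * u) - gam (\<mu> j) (T$i$j * u)))"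
        by (rule norm_prod_diff) (auto intro: phi_le gam_norm)
      also have "\<dots> = (\<Sum>j\<in>UNIV. u^2 * ((T$i$j)^2 * R j (T$i$j * u)))"
        by (rule sum.cong[OF refl]) (simp add: g_eq power_mult_distrib mult_ac)
      also have "\<dots> = u^2 * (\<Sum>j\<in>UNIV. (T$i$j)^2 * R j (T$i$j * u))"
        by (simp add: sum_distrib_left)
      finally have "cmod (\<phi> i u - gam (\<mu> i) u) \<le> u^2 * (\<Sum>j\<in>UNIV. (T$i$j)^2 * R j (T$i$j * u))" .
      moreover have "0 < u^2" using that by simp
      ultimately show ?thesis unfolding R_def by (subst pos_divide_le_eq) (simp_all add: mult.commute)
    qed
  qed
  have allpure: "r.pure i" for i
  proof (rule ccontr)
    assume np: "\<not> r.pure i"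
    have "\<phi> i u = gam (\<mu> i) u" for u
    proof (cases "u = 0")
      case True
      then show ?thesis unfolding \<phi>_def using real_distribution.char_zero[OF rd] by (simp add: gam0)
    next
      case False
      have "R i u = 0" by (rule r.impure_zero[OF np])
      then have "cmod (\<phi> i u - gam (\<mu> i) u) = 0" using g_eq[of i u] by simp
      then show ?thesis by simp
    qed
    then have ch: "char (distr M borel (\<lambda>\<omega>. s \<omega> $ i)) = char (density lborel (normal_density (\<mu> i) 1))"
      unfolding \<phi>_def by (simp add: fun_eq_iff char_normal)
    have rdn: "real_distribution (density lborel (normal_density (\<mu> i) 1))"
      unfolding real_distribution_def real_distribution_axioms_def
      by (auto intro: prob_space_normal_density)
    have "distr M borel (\<lambda>\<omega>. s \<omega> $ i) = density lborel (normal_density (\<mu> i) 1)"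
      by (rule Levy_uniqueness[OF rd rdn ch])
    then have "\<exists>mu sigma. (sigma::real) > 0 \<and> distr M borel (\<lambda>\<omega>. s \<omega> $ i) = density lborel (normal_density mu sigma)"
      by (intro exI[of _ "\<mu> i"] exI[of _ 1]) simp
    moreover have "non_gaussian M (\<lambda>\<omega>. s \<omega> $ i)" using src unfolding ica_source_def by simp
    ultimately show False unfolding non_gaussian_def by blast
  qed
  have inj: "inj r.sig" using r.sig_inj allpure by (auto intro: injI)
  have perm: "r.sig permutes UNIV" by (rule inj_imp_permutes) (use inj in auto)
  define eps where "eps j = T $ (inv r.sig j) $ j" for j
  have "\<forall>j. eps j \<in> {1, -1}"
  proof
    fix j
    have "\<bar>T $ (inv r.sig j) $ (r.sig (inv r.sig j))\<bar> = 1" by (rule r.sig_pure[OF allpure])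
    then have "\<bar>eps j\<bar> = 1" unfolding eps_def using permutes_inverses(1)[OF perm] by simp
    then show "eps j \<in> {1, -1}" by (auto simp: abs_if split: if_splits)
  qed
  moreover have "T = perm_neg_matrix r.sig eps"
  proof -
    have "T $ i $ j = perm_neg_matrix r.sig eps $ i $ j" for i j
    proof (cases "j = r.sig i")
      case True
      then show ?thesis unfolding eps_def perm_neg_matrix_def
        using permutes_inverses(2)[OF perm] by simp
    next
      case False
      then show ?thesis unfolding perm_neg_matrix_def
        using r.row_other[OF r.sig_pure[OF allpure] False] by simp
    qed
    then show ?thesis by (simp add: vec_eq_iff)
  qed
  ultimately show ?thesis using perm by blast
qed

end

lemma minv: assumes "invertible (X::real^'n::finite^'n)"
  shows "X ** matrix_inv X = mat 1" "matrix_inv X ** X = mat 1"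
proof -
  obtain Y where "X ** Y = mat 1 \<and> Y ** X = mat 1" using assms unfolding invertible_def by blast
  then have "X ** matrix_inv X = mat 1 \<and> matrix_inv X ** X = mat 1"
    unfolding matrix_inv_def by (rule someI)
  then show "X ** matrix_inv X = mat 1" "matrix_inv X ** X = mat 1" by auto
qed

lemma minv_unique: assumes "invertible (X::real^'n::finite^'n)" "X ** (Y::real^'n^'n) = mat 1"
  shows "matrix_inv X = Y"
proof -
  have "matrix_inv X = matrix_inv X ** (X ** Y)" using assms(2) by (simp add: matrix_mul_rid)
  also have "\<dots> = (matrix_inv X ** X) ** Y" by (simp add: matrix_mul_assoc)
  also have "\<dots> = Y" using minv(2)[OF assms(1)] by (simp add: matrix_mul_lid)
  finally show ?thesis .
qed

lemma minv_mult: assumes "invertible (X::real^'n::finite^'n)" "invertible (Y::real^'n^'n)"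
  shows "matrix_inv (X ** Y) = matrix_inv Y ** matrix_inv X"
proof -
  have inv: "invertible (X ** Y)" using assms by (rule invertible_mult)
  have "X ** Y ** (matrix_inv Y ** matrix_inv X) = X ** (Y ** matrix_inv Y) ** matrix_inv X"
    by (simp add: matrix_mul_assoc)
  also have "\<dots> = mat 1" using minv(1)[OF assms(1)] minv(1)[OF assms(2)] by (simp add: matrix_mul_rid)
  finally have eq: "X ** Y ** (matrix_inv Y ** matrix_inv X) = mat 1" .
  show ?thesis by (rule minv_unique[OF inv eq])
qed

lemma cond_distr_eq:
  fixes s :: "'a \<Rightarrow> real^'n::finite"
  assumes model: "lin_model M c s B A" and k: "k \<in> {0, 1}"
  shows "cond_distr M (model_x c s B A) c k = distr M borel (\<lambda>\<omega>. A k *v (B *v s \<omega>))"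
proof -
  interpret prob_space M using model unfolding lin_model_def by simp
  have cm: "c \<in> measurable M (count_space UNIV)" using model unfolding lin_model_def by simp
  have c01: "\<And>\<omega>. \<omega> \<in> space M \<Longrightarrow> c \<omega> \<in> {0, 1}" using model unfolding lin_model_def by simp
  have pos: "measure M {\<omega> \<in> space M. c \<omega> = k} > 0" using model k unfolding lin_model_def by auto
  have ind: "\<And>S. S \<in> sets borel \<Longrightarrow>
        measure M {\<omega> \<in> space M. B *v s \<omega> \<in> S \<and> c \<omega> = k} =
        measure M {\<omega> \<in> space M. B *v s \<omega> \<in> S} * measure M {\<omega> \<in> space M. c \<omega> = k}"
    using model unfolding lin_model_def by blast
  have src: "ica_source M s" using model unfolding lin_model_def by simp
  have sm: "s \<in> borel_measurable M" by (rule src_meas[OF src])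
  have Esets: "{\<omega> \<in> space M. c \<omega> = j} \<in> sets M" for j
    using cm by measurable
  define E where "E = {\<omega> \<in> space M. c \<omega> = k}"
  define y where "y \<omega> = A k *v (B *v s \<omega>)" for \<omega>
  have ym: "y \<in> borel_measurable M" unfolding y_def
    by (intro measurable_compose[OF measurable_compose[OF sm mv_meas] mv_meas])
  have xm: "model_x c s B A \<in> borel_measurable M"
  proof -
    have ifm: "(\<lambda>\<omega>. if c \<omega> = 0 then A 0 *v (B *v s \<omega>) else A 1 *v (B *v s \<omega>)) \<in> borel_measurable M"
      by (intro measurable_If Esets measurable_compose[OF measurable_compose[OF sm mv_meas] mv_meas])
    have eqx: "model_x c s B A \<omega> = (if c \<omega> = 0 then A 0 *v (B *v s \<omega>) else A 1 *v (B *v s \<omega>))"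
      if "\<omega> \<in> space M" for \<omega>
    proof -
      have "c \<omega> = 0 \<or> c \<omega> = 1" using c01[OF that] by simp
      then show ?thesis unfolding model_x_def by auto
    qed
    show ?thesis by (subst measurable_cong[OF eqx]) (auto intro: ifm)
  qed
  have "cond_distr M (model_x c s B A) c k = distr (uniform_measure M E) borel y"
    unfolding cond_distr_def E_def[symmetric]
  proof (rule distr_cong_AE)
    show "AE \<omega> in uniform_measure M E. model_x c s B A \<omega> = y \<omega>"
      by (rule AE_uniform_measureI) (auto simp: E_def Esets model_x_def y_def)
    show "model_x c s B A \<in> uniform_measure M E \<rightarrow>\<^sub>M borel" using xm by simp
    show "y \<in> uniform_measure M E \<rightarrow>\<^sub>M borel" using ym by simp
  qed auto
  also have "\<dots> = distr M borel y"
  proof (rule measure_eqI)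
    show "sets (distr (uniform_measure M E) borel y) = sets (distr M borel y)" by simp
    fix S assume "S \<in> sets (distr (uniform_measure M E) borel y)"
    then have S: "S \<in> sets borel" by simp
    define S' where "S' = (\<lambda>v. A k *v v) -` S"
    have S': "S' \<in> sets borel" unfolding S'_def using measurable_sets_borel[OF mv_meas[of "A k"] S] by simp
    have yS: "y -` S \<inter> space M \<in> sets M" using ym S by measurable
    have eq1: "E \<inter> (y -` S \<inter> space M) = {\<omega> \<in> space M. B *v s \<omega> \<in> S' \<and> c \<omega> = k}"
      unfolding E_def S'_def y_def by auto
    have eq2: "y -` S \<inter> space M = {\<omega> \<in> space M. B *v s \<omega> \<in> S'}"
      unfolding S'_def y_def by auto
    have "emeasure (distr (uniform_measure M E) borel y) S = emeasure (uniform_measure M E) (y -` S \<inter> space M)"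
      using ym S by (subst emeasure_distr) auto
    also have "\<dots> = emeasure M (E \<inter> (y -` S \<inter> space M)) / emeasure M E"
      using yS by (subst emeasure_uniform_measure) (auto simp: E_def Esets)
    also have "\<dots> = ennreal (measure M {\<omega> \<in> space M. B *v s \<omega> \<in> S'} * measure M E) / ennreal (measure M E)"
      unfolding eq1 by (simp add: emeasure_eq_measure ind[OF S'] E_def)
    also have "\<dots> = ennreal (measure M {\<omega> \<in> space M. B *v s \<omega> \<in> S'})"
      using pos unfolding E_def by (subst divide_ennreal) auto
    also have "\<dots> = emeasure (distr M borel y) S"
      using ym S by (subst emeasure_distr) (auto simp: eq2 emeasure_eq_measure)
    finally show "emeasure (distr (uniform_measure M E) borel y) S = emeasure (distr M borel y) S" .
  qed
  finally show ?thesis unfolding y_def .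
qed

lemma inv_minv: assumes "invertible (X::real^'n::finite^'n)" shows "invertible (matrix_inv X)"
  unfolding invertible_def by (intro exI[of _ X]) (simp add: minv[OF assms])

lemma mvm: "(\<lambda>x::real^'n::finite. T *v x) \<in> borel_measurable borel"
  by (intro borel_measurable_continuous_onI linear_continuous_on matrix_vector_mul_bounded_linear)

lemma pull:
  fixes s :: "'a \<Rightarrow> real^'n::finite" and s' :: "'b \<Rightarrow> real^'n" and P P' :: "real^'n^'n"
  assumes sm: "s \<in> borel_measurable M" and sm': "s' \<in> borel_measurable M'"
    and inv: "invertible P'"
    and eq: "distr M' borel (\<lambda>\<omega>. P' *v s' \<omega>) = distr M borel (\<lambda>\<omega>. P *v s \<omega>)"
  shows "distr M' borel s' = distr M borel (\<lambda>\<omega>. (matrix_inv P' ** P) *v s \<omega>)"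
proof -
  have "distr (distr M' borel (\<lambda>\<omega>. P' *v s' \<omega>)) borel (\<lambda>v. matrix_inv P' *v v)
      = distr M' borel ((\<lambda>v. matrix_inv P' *v v) \<circ> (\<lambda>\<omega>. P' *v s' \<omega>))"
    by (rule distr_distr[OF mvm measurable_compose[OF sm' mvm]])
  also have "\<dots> = distr M' borel s'"
    by (rule distr_cong) (simp_all add: matrix_vector_mul_assoc minv(2)[OF inv])
  finally have 1: "distr (distr M' borel (\<lambda>\<omega>. P' *v s' \<omega>)) borel (\<lambda>v. matrix_inv P' *v v) = distr M' borel s'" .
  have "distr (distr M borel (\<lambda>\<omega>. P *v s \<omega>)) borel (\<lambda>v. matrix_inv P' *v v)
      = distr M borel ((\<lambda>v. matrix_inv P' *v v) \<circ> (\<lambda>\<omega>. P *v s \<omega>))"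
    by (rule distr_distr[OF mvm measurable_compose[OF sm mvm]])
  also have "\<dots> = distr M borel (\<lambda>\<omega>. (matrix_inv P' ** P) *v s \<omega>)"
    by (rule distr_cong) (simp_all add: matrix_vector_mul_assoc)
  finally show ?thesis using 1 eq by simp
qed

theorem theorem2:
  fixes M :: "'a measure" and c :: "'a \<Rightarrow> nat" and s :: "'a \<Rightarrow> real ^ 'n::finite"
    and B :: "real ^ 'n ^ 'n" and A :: "nat \<Rightarrow> real ^ 'n ^ 'n"
    and M' :: "'b measure" and c' :: "'b \<Rightarrow> nat" and s' :: "'b \<Rightarrow> real ^ 'n"
    and B' :: "real ^ 'n ^ 'n" and A' :: "nat \<Rightarrow> real ^ 'n ^ 'n"
  assumes model: "lin_model M c s B A"
    and asym: "\<And>p eps. p permutes (UNIV :: 'n set) \<Longrightarrow> (\<forall>j. eps j \<in> {1, -1}) \<Longrightarrow>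
                 perm_neg_matrix p eps \<noteq> mat 1 \<Longrightarrow>
                 distr M borel (\<lambda>\<omega>. perm_neg_matrix p eps *v s \<omega>) \<noteq> distr M borel s"
    and model': "lin_model M' c' s' B' A'"
    and same0: "cond_distr M' (model_x c' s' B' A') c' 0 = cond_distr M (model_x c s B A) c 0"
    and same1: "cond_distr M' (model_x c' s' B' A') c' 1 = cond_distr M (model_x c s B A) c 1"
  shows "A' 1 ** matrix_inv (A' 0) = A 1 ** matrix_inv (A 0)"
proof -
  interpret prob_space M using model unfolding lin_model_def by simp
  interpret M': prob_space M' using model' unfolding lin_model_def by simp
  have src: "ica_source M s" using model unfolding lin_model_def by simp
  have src': "ica_source M' s'" using model' unfolding lin_model_def by simp
  note sm = src_meas[OF src] and sm' = M'.src_meas[OF src']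
  have iB: "invertible B" and iA0: "invertible (A 0)" and iA1: "invertible (A 1)"
    using model unfolding lin_model_def by auto
  have iB': "invertible B'" and iA0': "invertible (A' 0)" and iA1': "invertible (A' 1)"
    using model' unfolding lin_model_def by auto
  define P where "P = A 0 ** B"
  define Q where "Q = A 1 ** B"
  define P' where "P' = A' 0 ** B'"
  define Q' where "Q' = A' 1 ** B'"
  have iP': "invertible P'" unfolding P'_def by (rule invertible_mult[OF iA0' iB'])
  have iQ': "invertible Q'" unfolding Q'_def by (rule invertible_mult[OF iA1' iB'])
  have iP: "invertible P" unfolding P_def by (rule invertible_mult[OF iA0 iB])
  have iQ: "invertible Q" unfolding Q_def by (rule invertible_mult[OF iA1 iB])
  have c0: "cond_distr M (model_x c s B A) c 0 = distr M borel (\<lambda>\<omega>. A 0 *v (B *v s \<omega>))"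
    by (rule cond_distr_eq[OF model]) simp
  have c1: "cond_distr M (model_x c s B A) c 1 = distr M borel (\<lambda>\<omega>. A 1 *v (B *v s \<omega>))"
    by (rule cond_distr_eq[OF model]) simp
  have c0': "cond_distr M' (model_x c' s' B' A') c' 0 = distr M' borel (\<lambda>\<omega>. A' 0 *v (B' *v s' \<omega>))"
    by (rule cond_distr_eq[OF model']) simp
  have c1': "cond_distr M' (model_x c' s' B' A') c' 1 = distr M' borel (\<lambda>\<omega>. A' 1 *v (B' *v s' \<omega>))"
    by (rule cond_distr_eq[OF model']) simp
  have d0: "distr M' borel (\<lambda>\<omega>. P' *v s' \<omega>) = distr M borel (\<lambda>\<omega>. P *v s \<omega>)"
    using same0 unfolding c0 c0' P_def P'_def by (simp add: matrix_vector_mul_assoc)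
  have d1: "distr M' borel (\<lambda>\<omega>. Q' *v s' \<omega>) = distr M borel (\<lambda>\<omega>. Q *v s \<omega>)"
    using same1 unfolding c1 c1' Q_def Q'_def by (simp add: matrix_vector_mul_assoc)
  define U where "U = matrix_inv P' ** P"
  define V where "V = matrix_inv Q' ** Q"
  have iV: "invertible V" unfolding V_def by (rule invertible_mult[OF inv_minv[OF iQ'] iQ])
  have UV: "distr M borel (\<lambda>\<omega>. U *v s \<omega>) = distr M borel (\<lambda>\<omega>. V *v s \<omega>)"
    using pull[OF sm sm' iP' d0] pull[OF sm sm' iQ' d1] unfolding U_def V_def by simp
  define T where "T = matrix_inv V ** U"
  have dT: "distr M borel (\<lambda>\<omega>. T *v s \<omega>) = distr M borel s"
  proof -
    have "distr M borel (\<lambda>\<omega>. T *v s \<omega>) = distr (distr M borel (\<lambda>\<omega>. U *v s \<omega>)) borel (\<lambda>v. matrix_inv V *v v)"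
      unfolding T_def
      by (subst distr_distr[OF mvm measurable_compose[OF sm mvm]]) (simp add: comp_def matrix_vector_mul_assoc)
    also have "\<dots> = distr (distr M borel (\<lambda>\<omega>. V *v s \<omega>)) borel (\<lambda>v. matrix_inv V *v v)"
      by (simp add: UV)
    also have "\<dots> = distr M borel (\<lambda>\<omega>. matrix_inv V *v (V *v s \<omega>))"
      by (subst distr_distr[OF mvm measurable_compose[OF sm mvm]]) (simp add: comp_def)
    also have "\<dots> = distr M borel s"
      by (rule distr_cong) (simp_all add: matrix_vector_mul_assoc minv(2)[OF iV])
    finally show ?thesis .
  qed
  obtain p eps where pe: "p permutes UNIV" "\<forall>j. eps j \<in> {1, -1}" "T = perm_neg_matrix p eps"
    using ident_main[OF src dT] by blast
  have T1: "T = mat 1"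
  proof (rule ccontr)
    assume "T \<noteq> mat 1"
    then have "distr M borel (\<lambda>\<omega>. perm_neg_matrix p eps *v s \<omega>) \<noteq> distr M borel s"
      using asym[OF pe(1,2)] pe(3) by simp
    then show False using dT pe(3) by simp
  qed
  have "V ** T = (V ** matrix_inv V) ** U" unfolding T_def by (simp only: matrix_mul_assoc)
  then have "V ** T = U" by (simp add: minv(1)[OF iV])
  then have UV': "U = V" using T1 by simp
  have "Q' ** U = (Q' ** matrix_inv Q') ** Q" unfolding UV' V_def by (simp only: matrix_mul_assoc)
  then have QU: "Q' ** U = Q" by (simp add: minv(1)[OF iQ'])
  have "Q' ** matrix_inv P' ** (P ** matrix_inv P) = Q' ** U ** matrix_inv P"
    unfolding U_def by (simp only: matrix_mul_assoc)
  then have key: "Q' ** matrix_inv P' = Q ** matrix_inv P"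
    unfolding QU by (simp add: minv(1)[OF iP])
  have "Q' ** matrix_inv P' = A' 1 ** (B' ** matrix_inv B') ** matrix_inv (A' 0)"
    unfolding Q'_def P'_def minv_mult[OF iA0' iB'] by (simp only: matrix_mul_assoc)
  then have k1: "Q' ** matrix_inv P' = A' 1 ** matrix_inv (A' 0)"
    by (simp add: minv(1)[OF iB'])
  have "Q ** matrix_inv P = A 1 ** (B ** matrix_inv B) ** matrix_inv (A 0)"
    unfolding Q_def P_def minv_mult[OF iA0 iB] by (simp only: matrix_mul_assoc)
  then have k2: "Q ** matrix_inv P = A 1 ** matrix_inv (A 0)"
    by (simp add: minv(1)[OF iB])
  show ?thesis using key k1 k2 by simp
qed

end
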